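(* Let $P=(P_1,\ldots,P_n)$ be a reduced profile of linear orders on a finite set of alternatives $A$, with voter set $N=\{1,\ldots,n\}$, and suppose $P$ is single-crossing with respect to some tree on $N$. Then the tree on $N$ which is minimal with respect to $P$ and with respect to which $P$ is single-crossing is unique.
   Context: Voter $i$ prefers $a$ to $b$ is written $a\succ_i b$. A profile is reduced if no two voters have identical linear orders. Given a tree $T=(N,E)$ on the voter set, the profile is single-crossing with respect to $T$ if for every pair of distinct alternatives $a,b$ one of the following holds: (i) there is an edge $e\in E$ (an "$ab$-cut") such that, removing $e$ from $T$, the two resulting subtrees have vertex sets $V_1,V_2$ with all voters in $V_1$ preferring $a$ to $b$ and all voters in $V_2$ preferring $b$ to $a$; or (ii) all voters prefer $a$ to $b$, or all voters prefer $b$ to $a$. $T$ is minimal with respect to $P$ if every edge of $T$ is an $ab$-cut for some pair of alternatives $a,b$. *)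

theory Defs
  imports Main
begin

text \<open>Voters are natural numbers; a profile assigns to each voter i a strict
linear order P i on the alternatives A, where (a,b) \<in> P i means a \<succ>_i b.\<close>

definition profile :: "'a set \<Rightarrow> nat set \<Rightarrow> (nat \<Rightarrow> ('a \<times> 'a) set) \<Rightarrow> bool" where
  "profile A N P \<longleftrightarrow> (\<forall>i\<in>N. strict_linear_order_on A (P i) \<and> P i \<subseteq> A \<times> A)"

definition reduced :: "nat set \<Rightarrow> (nat \<Rightarrow> ('a \<times> 'a) set) \<Rightarrow> bool" where
  "reduced N P \<longleftrightarrow> (\<forall>i\<in>N. \<forall>j\<in>N. i \<noteq> j \<longrightarrow> P i \<noteq> P j)"

definition adj :: "'v set set \<Rightarrow> ('v \<times> 'v) set" where
  "adj E = {(u, v). {u, v} \<in> E}"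

definition is_graph :: "'v set \<Rightarrow> 'v set set \<Rightarrow> bool" where
  "is_graph V E \<longleftrightarrow> (\<forall>e\<in>E. \<exists>u v. e = {u, v} \<and> u \<noteq> v \<and> u \<in> V \<and> v \<in> V)"

definition connected_graph :: "'v set \<Rightarrow> 'v set set \<Rightarrow> bool" where
  "connected_graph V E \<longleftrightarrow> (\<forall>u\<in>V. \<forall>v\<in>V. (u, v) \<in> (adj E)\<^sup>*)"

definition is_cycle :: "'v set set \<Rightarrow> 'v list \<Rightarrow> bool" where
  "is_cycle E cs \<longleftrightarrow> length cs \<ge> 3 \<and> distinct cs
     \<and> (\<forall>k. Suc k < length cs \<longrightarrow> {cs ! k, cs ! Suc k} \<in> E)
     \<and> {last cs, hd cs} \<in> E"

definition acyclic_graph :: "'v set set \<Rightarrow> bool" where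
  "acyclic_graph E \<longleftrightarrow> (\<nexists>cs. is_cycle E cs)"

definition is_tree :: "'v set \<Rightarrow> 'v set set \<Rightarrow> bool" where
  "is_tree V E \<longleftrightarrow> is_graph V E \<and> connected_graph V E \<and> acyclic_graph E"

definition ab_cut :: "nat set set \<Rightarrow> (nat \<Rightarrow> ('a \<times> 'a) set) \<Rightarrow> 'a \<Rightarrow> 'a \<Rightarrow> nat set \<Rightarrow> bool" where
  "ab_cut E P a b e \<longleftrightarrow> e \<in> E \<and> (\<exists>u v. e = {u, v} \<and> u \<noteq> v
     \<and> (\<forall>w. (u, w) \<in> (adj (E - {e}))\<^sup>* \<longrightarrow> (a, b) \<in> P w)
     \<and> (\<forall>w. (v, w) \<in> (adj (E - {e}))\<^sup>* \<longrightarrow> (b, a) \<in> P w))"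

definition single_crossing_tree ::
  "'a set \<Rightarrow> nat set \<Rightarrow> (nat \<Rightarrow> ('a \<times> 'a) set) \<Rightarrow> nat set set \<Rightarrow> bool" where
  "single_crossing_tree A N P E \<longleftrightarrow>
     (\<forall>a\<in>A. \<forall>b\<in>A. a \<noteq> b \<longrightarrow>
        (\<exists>e\<in>E. ab_cut E P a b e)
        \<or> (\<forall>i\<in>N. (a, b) \<in> P i) \<or> (\<forall>i\<in>N. (b, a) \<in> P i))"

definition minimal_tree ::
  "'a set \<Rightarrow> (nat \<Rightarrow> ('a \<times> 'a) set) \<Rightarrow> nat set set \<Rightarrow> bool" where
  "minimal_tree A P E \<longleftrightarrow> (\<forall>e\<in>E. \<exists>a\<in>A. \<exists>b\<in>A. a \<noteq> b \<and> ab_cut E P a b e)"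

end

theory Submission imports Defs begin
lemma shortest_walk:
  assumes "(z0,w) \<in> R\<^sup>*" "z0 \<in> S"
  shows "\<exists>f m. f 0 \<in> S \<and> f m = w \<and> (\<forall>i<m. (f i, f (Suc i)) \<in> R) \<and> inj_on f {..m}
            \<and> (\<forall>i. 0<i \<and> i\<le>m \<longrightarrow> f i \<notin> S)"
proof -
  define Q where "Q m = (\<exists>f. f 0 \<in> S \<and> f m = w \<and> (\<forall>i<m. (f i, f (Suc i)) \<in> R))" for m
  from assms obtain n where "(z0,w) \<in> R ^^ n" by (auto simp: rtrancl_power)
  hence "Q n" using assms(2) unfolding Q_def relpow_fun_conv by blast
  hence "\<exists>m. Q m \<and> (\<forall>k<m. \<not> Q k)" using exists_least_iff[of Q] by blast
  then obtain m where Qm: "Q m" and least: "\<And>k. k<m \<Longrightarrow> \<not> Q k" by blast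
  from Qm obtain f where f0: "f 0 \<in> S" and fm: "f m = w" and fs: "\<forall>i<m. (f i, f (Suc i)) \<in> R"
    unfolding Q_def by blast
  have inj: "inj_on f {..m}"
  proof (rule ccontr)
    assume "\<not> inj_on f {..m}"
    then obtain i j where ij: "i < j" "j \<le> m" "f i = f j"
      unfolding inj_on_def by (metis atMost_iff linorder_neqE_nat)
    define g where "g k = (if k < i then f k else f (k + (j - i)))" for k
    have "Q (m - (j - i))" unfolding Q_def
    proof (intro exI conjI allI impI)
      show "g 0 \<in> S" using f0 ij by (cases "i = 0") (auto simp: g_def)
      show "g (m - (j - i)) = w" using ij fm by (auto simp: g_def)
      fix k assume k: "k < m - (j - i)"
      show "(g k, g (Suc k)) \<in> R"
      proof (cases "Suc k < i")
        case True thus ?thesis using fs ij by (auto simp: g_def)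
      next
        case False
        show ?thesis
        proof (cases "k < i")
          case True
          with False have "Suc k = i" by simp
          have "(f k, f (Suc k)) \<in> R" using fs ij True by auto
          thus ?thesis using ij True \<open>Suc k = i\<close> by (auto simp: g_def)
        next
          case False
          thus ?thesis using fs ij k
            by (auto simp: g_def)
        qed
      qed
    qed
    moreover have "m - (j - i) < m" using ij by simp
    ultimately show False using least by blast
  qed
  have nS: "\<forall>i. 0<i \<and> i\<le>m \<longrightarrow> f i \<notin> S"
  proof (intro allI impI)
    fix i assume i: "0<i \<and> i\<le>m"
    show "f i \<notin> S"
    proof
      assume fi: "f i \<in> S"
      have "Q (m - i)" unfolding Q_def
        apply (rule exI[of _ "\<lambda>k. f (k + i)"])
        using fi fm fs i by auto
      moreover have "m - i < m" using i by simp
      ultimately show False using least by blast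
    qed
  qed
  show ?thesis using f0 fm fs inj nS by blast
qed
lemma adj_sym: "(x,y) \<in> adj E \<Longrightarrow> (y,x) \<in> adj E"
  by (auto simp: adj_def insert_commute)

lemma adj_rtrancl_sym: "(x,y) \<in> (adj E)\<^sup>* \<Longrightarrow> (y,x) \<in> (adj E)\<^sup>*"
proof -
  have "sym (adj E)" by (auto simp: sym_def intro: adj_sym)
  hence "sym ((adj E)\<^sup>*)" by (rule sym_rtrancl)
  thus "(x,y) \<in> (adj E)\<^sup>* \<Longrightarrow> (y,x) \<in> (adj E)\<^sup>*" by (auto simp: sym_def)
qed

lemma walk_reach:
  assumes "\<forall>i. j \<le> i \<and> i < k \<longrightarrow> (f i, f (Suc i)) \<in> adj T \<and> {f i, f (Suc i)} \<noteq> g"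
    and "j \<le> k"
  shows "(f j, f k) \<in> (adj (T - {g}))\<^sup>*"
  using assms
proof (induction k)
  case 0 thus ?case by simp
next
  case (Suc k)
  show ?case
  proof (cases "j = Suc k")
    case True thus ?thesis by simp
  next
    case False
    hence "j \<le> k" using Suc by simp
    hence "(f j, f k) \<in> (adj (T - {g}))\<^sup>*" using Suc by auto
    moreover have "(f k, f (Suc k)) \<in> adj (T - {g})" using Suc.prems \<open>j \<le> k\<close>
      by (auto simp: adj_def)
    ultimately show ?thesis by simp
  qed
qed

definition btw :: "(nat \<Rightarrow> ('a \<times> 'a) set) \<Rightarrow> nat \<Rightarrow> nat \<Rightarrow> nat \<Rightarrow> bool" where
  "btw P u v w \<longleftrightarrow> (\<forall>c d. (c,d) \<in> P u \<and> (c,d) \<in> P v \<longrightarrow> (c,d) \<in> P w)"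

definition charc :: "(nat \<Rightarrow> ('a \<times> 'a) set) \<Rightarrow> nat set \<Rightarrow> nat \<Rightarrow> nat \<Rightarrow> bool" where
  "charc P N u v \<longleftrightarrow> u \<in> N \<and> v \<in> N \<and> u \<noteq> v \<and> (\<forall>w\<in>N. btw P u v w \<longrightarrow> w = u \<or> w = v)"

locale sct =
  fixes A :: "'a set" and N :: "nat set" and P :: "nat \<Rightarrow> ('a \<times> 'a) set" and T :: "nat set set"
  assumes prof: "profile A N P" and red: "reduced N P" and gr: "is_graph N T"
    and conn: "connected_graph N T" and sc: "single_crossing_tree A N P T"
begin

lemma asym: "i \<in> N \<Longrightarrow> (a,b) \<in> P i \<Longrightarrow> (b,a) \<in> P i \<Longrightarrow> False"
  using prof unfolding profile_def strict_linear_order_on_def trans_def irrefl_def by blast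

lemma tot: "i \<in> N \<Longrightarrow> a \<in> A \<Longrightarrow> b \<in> A \<Longrightarrow> a \<noteq> b \<Longrightarrow> (a,b) \<notin> P i \<Longrightarrow> (b,a) \<in> P i"
  using prof unfolding profile_def strict_linear_order_on_def total_on_def by blast

lemma inA: "i \<in> N \<Longrightarrow> (a,b) \<in> P i \<Longrightarrow> a \<in> A \<and> b \<in> A \<and> a \<noteq> b"
  using prof unfolding profile_def strict_linear_order_on_def irrefl_def by blast

lemma edgeN: "{x,y} \<in> T \<Longrightarrow> x \<in> N \<and> y \<in> N \<and> x \<noteq> y"
  using gr unfolding is_graph_def by (metis doubleton_eq_iff)

lemma adjN: "(x,y) \<in> adj T \<Longrightarrow> {x,y} \<in> T"
  by (auto simp: adj_def)

lemma coverage: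
  assumes "{u',v'} \<in> T" "t \<in> N"
  shows "(u',t) \<in> (adj (T - {{u',v'}}))\<^sup>* \<or> (v',t) \<in> (adj (T - {{u',v'}}))\<^sup>*"
proof -
  have "(u',t) \<in> (adj T)\<^sup>*" using conn assms edgeN unfolding connected_graph_def by blast
  thus ?thesis
  proof (induction rule: rtrancl_induct)
    case base thus ?case by simp
  next
    case (step s t)
    show ?case
    proof (cases "{s,t} = {u',v'}")
      case True thus ?thesis by (auto simp: doubleton_eq_iff)
    next
      case False
      hence "(s,t) \<in> adj (T - {{u',v'}})" using step by (auto simp: adj_def)
      thus ?thesis using step.IH by (meson rtrancl.rtrancl_into_rtrancl)
    qed
  qed
qed

lemma prop1:
  assumes "ab_cut T P a b g" "s \<in> N" "(s,t) \<in> (adj (T - {g}))\<^sup>*" "(a,b) \<in> P s"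
  shows "(a,b) \<in> P t"
proof -
  obtain u v where g: "g \<in> T" "g = {u,v}"
    and L: "\<forall>w. (u, w) \<in> (adj (T - {g}))\<^sup>* \<longrightarrow> (a, b) \<in> P w"
    and R: "\<forall>w. (v, w) \<in> (adj (T - {g}))\<^sup>* \<longrightarrow> (b, a) \<in> P w"
    using assms(1) unfolding ab_cut_def by blast
  have "(u,s) \<in> (adj (T - {g}))\<^sup>* \<or> (v,s) \<in> (adj (T - {g}))\<^sup>*" using coverage g assms(2) by blast
  moreover have "(v,s) \<notin> (adj (T - {g}))\<^sup>*" using R asym assms(2,4) by blast
  ultimately have "(u,s) \<in> (adj (T - {g}))\<^sup>*" by blast
  hence "(u,t) \<in> (adj (T - {g}))\<^sup>*" using assms(3) by simp
  thus ?thesis using L by blast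
qed

lemma prop2:
  assumes "ab_cut T P a b g" "s \<in> N" "(s,t) \<in> (adj (T - {g}))\<^sup>*" "(b,a) \<in> P s"
  shows "(b,a) \<in> P t"
proof -
  obtain u v where g: "g \<in> T" "g = {u,v}"
    and L: "\<forall>w. (u, w) \<in> (adj (T - {g}))\<^sup>* \<longrightarrow> (a, b) \<in> P w"
    and R: "\<forall>w. (v, w) \<in> (adj (T - {g}))\<^sup>* \<longrightarrow> (b, a) \<in> P w"
    using assms(1) unfolding ab_cut_def by blast
  have "(u,s) \<in> (adj (T - {g}))\<^sup>* \<or> (v,s) \<in> (adj (T - {g}))\<^sup>*" using coverage g assms(2) by blast
  moreover have "(u,s) \<notin> (adj (T - {g}))\<^sup>*" using L asym assms(2,4) by blast
  ultimately have "(v,s) \<in> (adj (T - {g}))\<^sup>*" by blast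
  hence "(v,t) \<in> (adj (T - {g}))\<^sup>*" using assms(3) by simp
  thus ?thesis using R by blast
qed

lemma some_cut:
  assumes "p \<in> N" "x \<in> N" "(a,b) \<in> P p" "(b,a) \<in> P x"
  shows "\<exists>g\<in>T. ab_cut T P a b g"
proof -
  have "a \<in> A" "b \<in> A" "a \<noteq> b" using inA assms by blast+
  thus ?thesis using sc assms asym unfolding single_crossing_tree_def by blast
qed

lemma cut_is_edge:
  assumes "{p,x} \<in> T" "(a,b) \<in> P p" "(b,a) \<in> P x"
  shows "ab_cut T P a b {p,x}"
proof -
  have N: "p \<in> N" "x \<in> N" using edgeN assms(1) by auto
  obtain g where g: "g \<in> T" "ab_cut T P a b g" using some_cut N assms by blast
  show ?thesis
  proof (cases "g = {p,x}")
    case True thus ?thesis using g by simp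
  next
    case False
    hence "(p,x) \<in> (adj (T - {g}))\<^sup>*" using assms(1) by (auto simp: adj_def)
    hence "(a,b) \<in> P x" using prop1 g N assms by blast
    thus ?thesis using asym N assms by blast
  qed
qed

lemma diff_pair:
  assumes "p \<in> N" "x \<in> N" "p \<noteq> x"
  shows "\<exists>a b. (a,b) \<in> P p \<and> (b,a) \<in> P x"
proof -
  have "P p \<noteq> P x" using red assms unfolding reduced_def by blast
  then obtain a b where "((a,b) \<in> P p \<and> (a,b) \<notin> P x) \<or> ((a,b) \<in> P x \<and> (a,b) \<notin> P p)" by auto
  thus ?thesis
  proof
    assume h: "(a,b) \<in> P p \<and> (a,b) \<notin> P x"
    hence "(b,a) \<in> P x" using tot inA assms by blast
    thus ?thesis using h by blast
  next
    assume h: "(a,b) \<in> P x \<and> (a,b) \<notin> P p"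
    hence "(b,a) \<in> P p" using tot inA assms by blast
    thus ?thesis using h by blast
  qed
qed

lemma minimal: "minimal_tree A P T"
  unfolding minimal_tree_def
proof
  fix e assume e: "e \<in> T"
  then obtain p x where ex: "e = {p,x}" "p \<noteq> x" "p \<in> N" "x \<in> N" using gr unfolding is_graph_def by blast
  obtain a b where ab: "(a,b) \<in> P p" "(b,a) \<in> P x" using diff_pair ex by blast
  have "ab_cut T P a b e" using cut_is_edge ab e ex by simp
  moreover have "a \<in> A" "b \<in> A" "a \<noteq> b" using inA ex ab by blast+
  ultimately show "\<exists>a\<in>A. \<exists>b\<in>A. a \<noteq> b \<and> ab_cut T P a b e" by blast
qed

lemma dir1:
  assumes e: "{x,y} \<in> T" and w: "w \<in> N" "w \<noteq> x" "w \<noteq> y"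
  shows "\<not> btw P x y w"
proof -
  have xy: "x \<in> N" "y \<in> N" "x \<noteq> y" using edgeN e by auto
  have "(x,w) \<in> (adj T)\<^sup>*" using conn xy w unfolding connected_graph_def by blast
  then obtain f m where f0: "f 0 \<in> {x,y}" and fm: "f m = w"
    and fs: "\<forall>i<m. (f i, f (Suc i)) \<in> adj T" and inj: "inj_on f {..m}"
    and nS: "\<forall>i. 0<i \<and> i\<le>m \<longrightarrow> f i \<notin> {x,y}"
    using shortest_walk[of x w "adj T" "{x,y}"] by blast
  have m0: "0 < m" using f0 fm w by (cases m) auto
  define z where "z = f 0"
  define p where "p = f 1"
  have zp: "{z,p} \<in> T" using fs m0 adjN unfolding z_def p_def by (metis One_nat_def)
  have pN: "p \<in> N" "z \<in> N" using edgeN zp by auto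
  have pS: "p \<notin> {x,y}" using nS m0 unfolding p_def by simp
  obtain a b where ab: "(a,b) \<in> P p" "(b,a) \<in> P z" using diff_pair pN pS f0 z_def by blast
  have cut: "ab_cut T P a b {p,z}" using cut_is_edge[of p z a b] zp ab by (simp add: insert_commute)
  have "{x,y} \<noteq> {p,z}" using pS by (auto simp: doubleton_eq_iff)
  hence "(x,y) \<in> (adj (T - {{p,z}}))\<^sup>*" using e by (auto simp: adj_def)
  hence zo: "(z,x) \<in> (adj (T - {{p,z}}))\<^sup>* \<and> (z,y) \<in> (adj (T - {{p,z}}))\<^sup>*"
    using f0 z_def adj_rtrancl_sym by auto
  have bx: "(b,a) \<in> P x" and by': "(b,a) \<in> P y" using prop2[OF cut] pN zo ab by blast+
  have "\<forall>i. 1 \<le> i \<and> i < m \<longrightarrow> (f i, f (Suc i)) \<in> adj T \<and> {f i, f (Suc i)} \<noteq> {p,z}"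
  proof (intro allI impI conjI)
    fix i assume i: "1 \<le> i \<and> i < m"
    show "(f i, f (Suc i)) \<in> adj T" using fs i by simp
    have "f i \<noteq> f 0" using inj_onD[OF inj, of i 0] i by auto
    moreover have "f (Suc i) \<noteq> f 0" using inj_onD[OF inj, of "Suc i" 0] i by auto
    ultimately show "{f i, f (Suc i)} \<noteq> {p,z}" unfolding z_def by (auto simp: doubleton_eq_iff)
  qed
  hence "(f 1, f m) \<in> (adj (T - {{p,z}}))\<^sup>*" using walk_reach[of 1 m f T "{p,z}"] m0 by simp
  hence "(a,b) \<in> P w" using prop1[OF cut] pN ab fm p_def by blast
  thus ?thesis using bx by' asym w unfolding btw_def by blast
qed

lemma dir2:
  assumes "u \<in> N" "v \<in> N" "u \<noteq> v" "{u,v} \<notin> T"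
  shows "\<exists>w\<in>N. w \<noteq> u \<and> w \<noteq> v \<and> btw P u v w"
proof -
  have "(u,v) \<in> (adj T)\<^sup>*" using conn assms unfolding connected_graph_def by blast
  then obtain f m where f0: "f 0 \<in> {u}" and fm: "f m = v"
    and fs: "\<forall>i<m. (f i, f (Suc i)) \<in> adj T" and inj: "inj_on f {..m}"
    using shortest_walk[of u v "adj T" "{u}"] by blast
  have m0: "m \<noteq> 0" using f0 fm assms(3) by (cases "m = 0") auto
  have m1: "m \<noteq> 1" using f0 fm fs assms adjN by auto
  hence m2: "2 \<le> m" using m0 by simp
  define w where "w = f 1"
  have e01: "{f 0, f 1} \<in> T" using fs m2 adjN[of "f 0" "f 1"] by auto
  have wN: "w \<in> N" using edgeN e01 w_def by auto
  have "f 1 \<noteq> f 0" using inj_onD[OF inj, of 1 0] m2 by auto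
  moreover have "f 1 \<noteq> f m" using inj_onD[OF inj, of 1 m] m2 by auto
  ultimately have wu: "w \<noteq> u" "w \<noteq> v" using f0 fm unfolding w_def by auto
  have "btw P u v w" unfolding btw_def
  proof (intro allI impI)
    fix c d assume cd: "(c,d) \<in> P u \<and> (c,d) \<in> P v"
    show "(c,d) \<in> P w"
    proof (rule ccontr)
      assume nw: "(c,d) \<notin> P w"
      have "c \<in> A" "d \<in> A" "c \<noteq> d" using inA cd assms by blast+
      hence dc: "(d,c) \<in> P w" using tot wN nw by blast
      obtain g where g: "g \<in> T" "ab_cut T P c d g" using some_cut cd dc assms wN by blast
      have "g = {f 0, f 1}"
      proof (rule ccontr)
        assume "g \<noteq> {f 0, f 1}"
        hence "(u,w) \<in> (adj (T - {g}))\<^sup>*" using e01 f0 w_def by (auto simp: adj_def)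
        thus False using prop1[OF g(2)] assms cd nw by blast
      qed
      have "\<exists>i. 1 \<le> i \<and> i < m \<and> {f i, f (Suc i)} = g"
      proof (rule ccontr)
        assume "\<not> ?thesis"
        hence "\<forall>i. 1 \<le> i \<and> i < m \<longrightarrow> (f i, f (Suc i)) \<in> adj T \<and> {f i, f (Suc i)} \<noteq> g"
          using fs by auto
        hence "(f 1, f m) \<in> (adj (T - {g}))\<^sup>*" using walk_reach[of 1 m f T g] m2 by simp
        hence "(d,c) \<in> P v" using prop2[OF g(2)] wN dc fm w_def by blast
        thus False using asym cd assms by blast
      qed
      then obtain i where i: "1 \<le> i" "i < m" "{f i, f (Suc i)} = {f 0, f 1}"
        using \<open>g = _\<close> by blast
      hence "f 0 = f i \<or> f 0 = f (Suc i)" by (auto simp: doubleton_eq_iff)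
      moreover have "f 0 \<noteq> f i" using inj_onD[OF inj, of 0 i] i by auto
      moreover have "f 0 \<noteq> f (Suc i)" using inj_onD[OF inj, of 0 "Suc i"] i by auto
      ultimately show False by blast
    qed
  qed
  thus ?thesis using wN wu by blast
qed

lemma charT: "T = {e. \<exists>u v. e = {u,v} \<and> charc P N u v}"
proof (intro set_eqI iffI)
  fix e assume e: "e \<in> T"
  then obtain u v where ex: "e = {u,v}" "u \<noteq> v" "u \<in> N" "v \<in> N" using gr unfolding is_graph_def by blast
  have "charc P N u v" unfolding charc_def using ex dir1[of u v] e by blast
  thus "e \<in> {e. \<exists>u v. e = {u,v} \<and> charc P N u v}" using ex by blast
next
  fix e assume "e \<in> {e. \<exists>u v. e = {u,v} \<and> charc P N u v}"
  then obtain u v where ex: "e = {u,v}" "charc P N u v" by blast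
  show "e \<in> T"
  proof (rule ccontr)
    assume "e \<notin> T"
    have c: "u \<in> N" "v \<in> N" "u \<noteq> v" "\<forall>w\<in>N. btw P u v w \<longrightarrow> w = u \<or> w = v"
      using ex(2) unfolding charc_def by auto
    obtain w where "w\<in>N" "w \<noteq> u" "w \<noteq> v" "btw P u v w" using dir2[OF c(1,2,3)] \<open>e \<notin> T\<close> ex(1) by blast
    thus False using c(4) by blast
  qed
qed

end

theorem theorem4:
  fixes A :: "'a set" and n :: nat and P :: "nat \<Rightarrow> ('a \<times> 'a) set"
  assumes "finite A"
    and "profile A {1..n} P"
    and "reduced {1..n} P"
    and "\<exists>T. is_tree {1..n} T \<and> single_crossing_tree A {1..n} P T"
  shows "\<exists>!T. is_tree {1..n} T \<and> single_crossing_tree A {1..n} P T \<and> minimal_tree A P T"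
proof -
  obtain T where T: "is_tree {1..n} T" "single_crossing_tree A {1..n} P T" using assms(4) by blast
  have loc: "sct A {1..n} P T'" if "is_tree {1..n} T'" "single_crossing_tree A {1..n} P T'" for T'
    using that assms(2,3) unfolding sct_def is_tree_def by blast
  show ?thesis
  proof (rule ex1I[of _ T])
    show "is_tree {1..n} T \<and> single_crossing_tree A {1..n} P T \<and> minimal_tree A P T"
      using T sct.minimal[OF loc[OF T]] by blast
  next
    fix T' assume "is_tree {1..n} T' \<and> single_crossing_tree A {1..n} P T' \<and> minimal_tree A P T'"
    hence "sct A {1..n} P T'" using loc by blast
    have e1: "T' = {e. \<exists>u v. e = {u,v} \<and> charc P {1..n} u v}" by (rule sct.charT[OF \<open>sct A {1..n} P T'\<close>])
    have e2: "T = {e. \<exists>u v. e = {u,v} \<and> charc P {1..n} u v}" by (rule sct.charT[OF loc[OF T]])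
    show "T' = T" using e1 e2 by simp
  qed
qed

end
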